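(* For every $\varepsilon>0$ and every $\alpha<1$ there exists $\delta>0$ such that the following holds. Let $G$ be a connected graph on vertex set $[n]$, let $R\sim G(n,\varepsilon/n)$ and $G^*=G\cup R$. Then asymptotically almost surely, for every set $S\subseteq [n]$ with $0<|S|\le \alpha n$, $$|\partial_{G^*}S|\ge \frac{\delta}{\log(en/|S|)}\,|S|.$$ In particular, asymptotically almost surely $c(G^* )\ge \frac{\delta}{\log(en)}$.
   Context: $G(n,p)$ denotes the binomial random graph on $[n]$ with each pair an edge independently with probability $p$; $G\cup R$ is the graph on $[n]$ with edge set the union of those of $G$ and $R$. For a graph $H$ and a vertex set $S$, $\partial_H S$ is the set of edges of $H$ with exactly one endpoint in $S$. The Cheeger constant is $c(H)=\min\{|\partial_H U|/|U| : 0<|U|\le |V(H)|/2\}$. Asymptotically almost surely means with probability tending to $1$ as $n\to\infty$, for an arbitrary sequence of such graphs $G=G_n$. *)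

theory Defs
  imports Complex_Main
begin

text \<open>Graphs on vertex set [n] = {0..<n}; an edge is a 2-element subset of [n].\<close>

definition all_pairs :: "nat \<Rightarrow> nat set set" where
  "all_pairs n = {e. \<exists>u v. u < n \<and> v < n \<and> u \<noteq> v \<and> e = {u, v}}"

definition connected_graph :: "nat \<Rightarrow> nat set set \<Rightarrow> bool" where
  "connected_graph n E \<longleftrightarrow> E \<subseteq> all_pairs n \<and>
     (\<forall>u<n. \<forall>v<n. (u, v) \<in> {(x, y). {x, y} \<in> E}\<^sup>*)"

definition boundary :: "nat set set \<Rightarrow> nat set \<Rightarrow> nat set set" where
  "boundary E S = {e \<in> E. card (e \<inter> S) = 1}"

definition cheeger :: "nat \<Rightarrow> nat set set \<Rightarrow> real" where
  "cheeger n E = Min {real (card (boundary E U)) / real (card U) | U.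
      U \<subseteq> {..<n} \<and> 0 < card U \<and> real (card U) \<le> real n / 2}"

text \<open>Probability that R \<sim> G(n,p) satisfies the property P: each pair in [n] is an
  edge independently with probability p.\<close>
definition gnp_prob :: "nat \<Rightarrow> real \<Rightarrow> (nat set set \<Rightarrow> bool) \<Rightarrow> real" where
  "gnp_prob n p P = (\<Sum>R\<in>Pow (all_pairs n).
      if P R then p ^ card R * (1 - p) ^ (card (all_pairs n) - card R) else 0)"

end

theory Submission
  imports Defs "HOL-Real_Asymp.Real_Asymp"
begin


lemma finite_all_pairs: "finite (all_pairs n)"
proof -
  have "all_pairs n \<subseteq> Pow {..<n}" unfolding all_pairs_def by auto
  thus ?thesis by (rule finite_subset) auto
qed

lemma gnp_weight_sum:
  fixes p :: real and A :: "'a set"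
  assumes "finite A"
  shows "(\<Sum>R\<in>Pow A. p ^ card R * (1 - p) ^ (card A - card R)) = 1"
proof -
  have "(\<Prod>x\<in>A. p + (1 - p)) = (\<Sum>X\<in>Pow A. (\<Prod>x\<in>X. p) * (\<Prod>x\<in>A-X. 1 - p))"
    by (rule prod_add[OF assms])
  also have "\<dots> = (\<Sum>R\<in>Pow A. p ^ card R * (1 - p) ^ (card A - card R))"
    using assms by (intro sum.cong refl) (auto simp: card_Diff_subset finite_subset)
  finally show ?thesis by simp
qed

lemma gnp_true: "gnp_prob n p (\<lambda>_. True) = 1"
  unfolding gnp_prob_def using gnp_weight_sum[OF finite_all_pairs] by simp

lemma gnp_mono:
  assumes "0 \<le> p" "p \<le> 1" "\<And>R. R \<subseteq> all_pairs n \<Longrightarrow> P R \<Longrightarrow> Q R"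
  shows "gnp_prob n p P \<le> gnp_prob n p Q"
  unfolding gnp_prob_def
  using assms by (intro sum_mono) auto

lemma gnp_le1:
  assumes "0 \<le> p" "p \<le> 1"
  shows "gnp_prob n p P \<le> 1"
  using gnp_mono[OF assms, of n P "\<lambda>_. True"] gnp_true by simp

lemma gnp_compl: "gnp_prob n p P = 1 - gnp_prob n p (\<lambda>R. \<not> P R)"
proof -
  have "gnp_prob n p P + gnp_prob n p (\<lambda>R. \<not> P R) = gnp_prob n p (\<lambda>_. True)"
    unfolding gnp_prob_def sum.distrib[symmetric] by (intro sum.cong) auto
  thus ?thesis using gnp_true by simp
qed

lemma gnp_union:
  assumes "0 \<le> p" "p \<le> 1" "finite I"
  shows "gnp_prob n p (\<lambda>R. \<exists>i\<in>I. Q i R) \<le> (\<Sum>i\<in>I. gnp_prob n p (Q i))"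
proof -
  let ?w = "\<lambda>R. p ^ card R * (1 - p) ^ (card (all_pairs n) - card R)"
  have "gnp_prob n p (\<lambda>R. \<exists>i\<in>I. Q i R) \<le>
        (\<Sum>R\<in>Pow (all_pairs n). \<Sum>i\<in>I. if Q i R then ?w R else 0)"
    unfolding gnp_prob_def
  proof (intro sum_mono)
    fix R
    show "(if \<exists>i\<in>I. Q i R then ?w R else 0) \<le> (\<Sum>i\<in>I. if Q i R then ?w R else 0)"
    proof (cases "\<exists>i\<in>I. Q i R")
      case True
      then obtain i where i: "i \<in> I" "Q i R" by auto
      have "?w R = (if Q i R then ?w R else 0)" using i by simp
      also have "\<dots> \<le> (\<Sum>i\<in>I. if Q i R then ?w R else 0)"
        by (rule member_le_sum) (use i assms in auto)
      finally show ?thesis using True by simp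
    next
      case False
      thus ?thesis using assms by (auto intro: sum_nonneg)
    qed
  qed
  also have "\<dots> = (\<Sum>i\<in>I. gnp_prob n p (Q i))"
    unfolding gnp_prob_def by (rule sum.swap)
  finally show ?thesis .
qed

lemma gnp_chernoff:
  assumes p: "0 \<le> p" "p \<le> 1" and C: "C \<subseteq> all_pairs n"
  shows "gnp_prob n p (\<lambda>R. real (card (R \<inter> C)) < t) \<le> exp (t - p * real (card C) / 2)"
proof -
  let ?A = "all_pairs n"
  have fA: "finite ?A" by (rule finite_all_pairs)
  let ?w = "\<lambda>R. p ^ card R * (1 - p) ^ (card ?A - card R)"
  have "gnp_prob n p (\<lambda>R. real (card (R \<inter> C)) < t) \<le>
        (\<Sum>R\<in>Pow ?A. ?w R * exp (t - real (card (R \<inter> C))))"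
    unfolding gnp_prob_def
  proof (intro sum_mono)
    fix R :: "nat set set"
    have "?w R \<ge> 0" using p by simp
    thus "(if real (card (R \<inter> C)) < t then ?w R else 0) \<le> ?w R * exp (t - real (card (R \<inter> C)))"
      by (auto intro!: mult_right_le_one_le[where y="exp _" and x="?w R", THEN order.trans[rotated]]
               simp: mult_le_cancel_left1)
  qed
  also have "\<dots> = exp t * (\<Sum>R\<in>Pow ?A. (\<Prod>x\<in>R. p * (if x \<in> C then exp (-1) else 1)) * (\<Prod>x\<in>?A-R. 1 - p))"
  proof -
    have "?w R * exp (t - real (card (R \<inter> C))) =
          exp t * ((\<Prod>x\<in>R. p * (if x \<in> C then exp (-1) else 1)) * (\<Prod>x\<in>?A-R. 1 - p))"
      if "R \<in> Pow ?A" for R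
    proof -
      have fR: "finite R" using that fA finite_subset by auto
      have "(\<Prod>x\<in>R. p * (if x \<in> C then exp (-1) else 1)) = p ^ card R * (\<Prod>x\<in>R. (if x \<in> C then exp (-1::real) else 1))"
        by (simp add: prod.distrib)
      also have "(\<Prod>x\<in>R. (if x \<in> C then exp (-1::real) else 1)) = exp (-1) ^ card (R \<inter> C)"
        using fR by (simp add: prod.If_cases Int_def)
      finally have 1: "(\<Prod>x\<in>R. p * (if x \<in> C then exp (-1) else 1)) = p ^ card R * exp (-1) ^ card (R \<inter> C)" .
      have 2: "(\<Prod>x\<in>?A-R. 1 - p) = (1-p) ^ (card ?A - card R)"
        using that fA by (simp add: card_Diff_subset finite_subset)
      have 3: "exp (t - real (card (R \<inter> C))) = exp t * exp (-1) ^ card (R \<inter> C)"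
        by (simp add: exp_diff exp_of_nat_mult[symmetric] exp_minus field_simps power_divide)
      show ?thesis unfolding 1 2 3 by (simp add: algebra_simps)
    qed
    thus ?thesis by (simp add: sum_distrib_left)
  qed
  also have "(\<Sum>R\<in>Pow ?A. (\<Prod>x\<in>R. p * (if x \<in> C then exp (-1) else 1)) * (\<Prod>x\<in>?A-R. 1 - p))
        = (\<Prod>x\<in>?A. p * (if x \<in> C then exp (-1) else 1) + (1 - p))"
    by (rule prod_add[OF fA, symmetric])
  also have "\<dots> = (\<Prod>x\<in>?A. if x \<in> C then p * exp (-1) + (1 - p) else 1)"
    by (intro prod.cong) auto
  also have "\<dots> = (p * exp (-1) + (1 - p)) ^ card C"
    using fA C by (simp add: prod.If_cases Int_absorb1)
  also have "\<dots> \<le> exp (- p / 2) ^ card C"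
  proof (rule power_mono)
    have "exp (1::real) \<ge> 2" using exp_ge_add_one_self[of 1] by simp
    hence "exp (-1::real) \<le> 1/2" by (simp add: exp_minus field_simps)
    hence "p * exp (-1) \<le> p / 2" using p by (metis mult_left_mono times_divide_eq_right mult_1_right)
    moreover have "1 - p / 2 \<le> exp (- p / 2)" using exp_ge_add_one_self[of "-p/2"] by simp
    ultimately show "p * exp (-1) + (1 - p) \<le> exp (- p / 2)" by linarith
    show "0 \<le> p * exp (-1) + (1 - p)" using p by simp
  qed
  also have "exp (- p / 2) ^ card C = exp (- p * real (card C) / 2)"
    by (simp add: exp_of_nat_mult[symmetric] algebra_simps)
  finally show ?thesis using exp_add[of t "- p * real (card C) / 2"]
    by (simp add: algebra_simps mult_left_mono)
qed



lemma card_pair_Int_eq1: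
  assumes "x \<noteq> y"
  shows "card ({x, y} \<inter> D) = 1 \<longleftrightarrow> (x \<in> D) \<noteq> (y \<in> D)"
  using assms by (cases "x \<in> D"; cases "y \<in> D") (auto simp: Int_insert_left)

lemma edge_in_all_pairs:
  assumes "e \<in> all_pairs n"
  obtains x y where "e = {x, y}" "x \<noteq> y" "x < n" "y < n"
  using assms unfolding all_pairs_def by auto

lemma boundary_nonempty:
  assumes conn: "connected_graph n E" and D: "D \<subseteq> {..<n}" "u \<in> D" "v < n" "v \<notin> D"
  shows "boundary E D \<noteq> {}"
proof -
  have E: "E \<subseteq> all_pairs n" and uv: "(u, v) \<in> {(x, y). {x, y} \<in> E}\<^sup>*"
    using conn D unfolding connected_graph_def by auto
  have "w \<in> D \<or> boundary E D \<noteq> {}" if "(u, w) \<in> {(x, y). {x, y} \<in> E}\<^sup>*" for w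
    using that
  proof (induction rule: rtrancl_induct)
    case base then show ?case using D by simp
  next
    case (step y z)
    from step.hyps(2) have yz: "{y, z} \<in> E" by simp
    have "{y, z} \<in> all_pairs n" using E yz by blast
    hence "y \<noteq> z" unfolding all_pairs_def by (auto simp: doubleton_eq_iff)
    show ?case
    proof (cases "y \<in> D \<and> z \<notin> D")
      case True
      hence "card ({y, z} \<inter> D) = 1" using \<open>y \<noteq> z\<close> card_pair_Int_eq1[of y z D] by blast
      hence "{y, z} \<in> boundary E D" using yz unfolding boundary_def by blast
      thus ?thesis by blast
    next
      case False thus ?thesis using step.IH by blast
    qed
  qed
  from this[OF uv] D(4) show ?thesis by blast
qed

lemma boundary_card_pos:
  assumes conn: "connected_graph n E" and D: "D \<subseteq> {..<n}" "D \<noteq> {}" "card D < n"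
  shows "card (boundary E D) \<ge> 1"
proof -
  have E: "E \<subseteq> all_pairs n" using conn unfolding connected_graph_def by auto
  have "boundary E D \<subseteq> all_pairs n" using E unfolding boundary_def by blast
  hence fin: "finite (boundary E D)" using finite_all_pairs finite_subset by blast
  from D obtain u where u: "u \<in> D" by auto
  have "\<not> {..<n} \<subseteq> D"
  proof
    assume "{..<n} \<subseteq> D"
    hence "D = {..<n}" using D(1) by blast
    thus False using D(3) by simp
  qed
  then obtain v where "v < n" "v \<notin> D" by auto
  from boundary_nonempty[OF conn D(1) u this] fin have "card (boundary E D) > 0"
    by (simp add: card_gt_0_iff)
  thus ?thesis by simp
qed

lemma encode_sub:
  assumes conn: "connected_graph n E"
    and S: "S \<subseteq> {..<n}" and S': "S' \<subseteq> {..<n}" "S' \<noteq> {}"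
    and Z: "\<Union>(boundary E S) = \<Union>(boundary E S')"
    and I: "S \<inter> \<Union>(boundary E S) = S' \<inter> \<Union>(boundary E S')"
  shows "S \<subseteq> S'"
proof (rule ccontr)
  assume "\<not> S \<subseteq> S'"
  then obtain u where u: "u \<in> S - S'" by auto
  have E: "E \<subseteq> all_pairs n" using conn unfolding connected_graph_def by auto
  have bd: "boundary E (S - S') = {}"
  proof (rule ccontr)
    assume "boundary E (S - S') \<noteq> {}"
    then obtain e where e: "e \<in> E" "card (e \<inter> (S - S')) = 1" unfolding boundary_def by auto
    have "e \<in> all_pairs n" using E e by blast
    then obtain x y where xy: "e = {x, y}" "x \<noteq> y" by (rule edge_in_all_pairs)
    have "\<exists>x y. e = {x, y} \<and> x \<noteq> y \<and> x \<in> S - S' \<and> y \<notin> S - S'"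
      using e(2) xy card_pair_Int_eq1[of x y "S - S'"] by (metis insert_commute)
    then obtain a b where ab: "e = {a, b}" "a \<noteq> b" "a \<in> S - S'" "b \<notin> S - S'" by blast
    show False
    proof (cases "b \<in> S")
      case False
      hence "e \<in> boundary E S" using ab e card_pair_Int_eq1[of a b S] unfolding boundary_def by auto
      hence "a \<in> S \<inter> \<Union>(boundary E S)" using ab by auto
      thus False using I ab by auto
    next
      case True
      hence "b \<in> S'" using ab by auto
      hence "e \<in> boundary E S'" using ab e card_pair_Int_eq1[of a b S'] unfolding boundary_def by auto
      hence "a \<in> S \<inter> \<Union>(boundary E S)" using ab Z by auto
      thus False using I ab by auto
    qed
  qed
  have "\<forall>v<n. v \<in> S - S'"
    using boundary_nonempty[OF conn _ u] bd S by blast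
  thus False using S' by auto
qed

lemma union_boundary_sub:
  assumes "E \<subseteq> all_pairs n"
  shows "\<Union>(boundary E S) \<subseteq> {..<n}"
  using assms unfolding boundary_def all_pairs_def by auto

lemma card_union_boundary:
  assumes "E \<subseteq> all_pairs n"
  shows "card (\<Union>(boundary E S)) \<le> 2 * card (boundary E S)"
proof -
  have "card (\<Union>(boundary E S)) \<le> sum card (boundary E S)" by (rule card_Union_le_sum_card)
  also have "\<dots> = sum (\<lambda>_. 2) (boundary E S)"
    by (rule sum.cong) (use assms in \<open>auto simp: boundary_def all_pairs_def\<close>)
  finally show ?thesis by simp
qed

lemma sum_pow_card:
  fixes x :: real
  shows "(\<Sum>Z\<in>Pow {..<n}. x ^ card Z) = (1 + x) ^ n"
proof -
  have "(\<Prod>i\<in>{..<n}. x + 1) = (\<Sum>X\<in>Pow {..<n}. (\<Prod>i\<in>X. x) * (\<Prod>i\<in>{..<n}-X. 1))"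
    by (rule prod_add) simp
  thus ?thesis by (simp add: add.commute)
qed

lemma count_family:
  fixes k y :: real
  assumes conn: "connected_graph n E"
    and T: "\<And>S. S \<in> T \<Longrightarrow> S \<subseteq> {..<n} \<and> S \<noteq> {} \<and> real (card (\<Union>(boundary E S))) < k"
    and y: "0 < y" "y \<le> 1"
  shows "real (card T) \<le> (1 + 2 * y) ^ n / y powr k"
proof -
  have E: "E \<subseteq> all_pairs n" using conn unfolding connected_graph_def by auto
  let ?Zs = "{Z \<in> Pow {..<n}. real (card Z) < k}"
  let ?enc = "\<lambda>S. (\<Union>(boundary E S), S \<inter> \<Union>(boundary E S))"
  have inj: "inj_on ?enc T"
  proof (rule inj_onI)
    fix S S' assume "S \<in> T" "S' \<in> T" "?enc S = ?enc S'"
    thus "S = S'" using encode_sub[OF conn] T by (metis (no_types, lifting) prod.inject subset_antisym)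
  qed
  have img: "?enc ` T \<subseteq> Sigma ?Zs Pow"
    using T union_boundary_sub[OF E] by auto
  have fin: "finite (Sigma ?Zs Pow)" by (intro finite_SigmaI) (auto intro: finite_subset[OF _ finite_lessThan])
  have "card T \<le> card (Sigma ?Zs Pow)"
    using card_inj_on_le[OF inj img fin] .
  also have "\<dots> = (\<Sum>Z\<in>?Zs. card (Pow Z))"
    by (rule card_SigmaI) (auto intro: finite_subset[OF _ finite_lessThan])
  also have "\<dots> = (\<Sum>Z\<in>?Zs. 2 ^ card Z)"
    by (intro sum.cong refl card_Pow) (auto intro: finite_subset[OF _ finite_lessThan])
  finally have "real (card T) \<le> real (\<Sum>Z\<in>?Zs. 2 ^ card Z)" by (rule of_nat_mono)
  also have "real (\<Sum>Z\<in>?Zs. 2 ^ card Z) = (\<Sum>Z\<in>?Zs. 2 ^ card Z)" by simp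
  also have "\<dots> \<le> (\<Sum>Z\<in>?Zs. (2 * y) ^ card Z / y powr k)"
  proof (intro sum_mono)
    fix Z assume "Z \<in> ?Zs"
    hence "real (card Z) \<le> k" by auto
    hence "y powr k \<le> y powr real (card Z)" using y by (intro powr_mono') auto
    hence "y powr k \<le> y ^ card Z" using y by (simp add: powr_realpow)
    hence "2 ^ card Z * y powr k \<le> 2 ^ card Z * y ^ card Z" by (intro mult_left_mono) auto
    thus "(2::real) ^ card Z \<le> (2 * y) ^ card Z / y powr k"
      using y by (simp add: field_simps power_mult_distrib)
  qed
  also have "\<dots> \<le> (\<Sum>Z\<in>Pow {..<n}. (2 * y) ^ card Z / y powr k)"
    by (intro sum_mono2) (use y in auto)
  also have "\<dots> = (1 + 2 * y) ^ n / y powr k"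
    by (simp only: sum_divide_distrib[symmetric] sum_pow_card)
  finally show ?thesis .
qed



lemma key_ineq:
  fixes c s n v \<delta> L k :: real
  assumes c: "c > 0" and s: "1 \<le> s" "s \<le> n"
    and v: "v = min c 1 / 24" and d: "\<delta> = v^2 / 2"
    and L: "L = ln (exp 1 * n / s)" and k: "k = 2 * \<delta> * s / L"
  shows "2 * k + k * ln (n / k) \<le> (c - \<delta>) * s / 2"
proof -
  have v0: "v > 0" "v \<le> 1/24" "v \<le> c / 24" using v c by auto
  have n0: "n > 0" using s by simp
  have e: "exp 1 * n / s = exp 1 * (n / s)" by simp
  have "ln (exp 1 * (n/s)) = 1 + ln (n/s)" by (subst ln_mult) (use n0 s in auto)
  hence Ldef: "L = 1 + ln (n / s)" unfolding L e .
  have "n / s \<ge> 1" using s by simp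
  hence L1: "L \<ge> 1" using Ldef by simp
  have "v^2 > 0" using v0 by simp
  hence d0: "\<delta> > 0" "2 * \<delta> = v^2" using d by linarith+
  have k0: "k > 0" unfolding k using d0(1) L1 s by simp
  have k': "k = v^2 * s / L" using k d0 by simp
  have "n / k = (n / s) * (L / v^2)" unfolding k' using L1 s v0 by (simp add: field_simps)
  hence "ln (n / k) = ln (n / s) + ln L - ln (v^2)"
    using L1 v0 n0 s by (simp add: ln_mult ln_div)
  also have "ln (v^2) = 2 * ln v" using v0 by (simp add: ln_realpow)
  also have "- ln v \<le> 1 / v"
  proof -
    have "ln (1 / v) \<le> 1 / v - 1" using v0 by (intro ln_le_minus_one) simp
    thus ?thesis using v0 by (simp add: ln_div)
  qed
  hence "ln (n / s) + ln L - 2 * ln v \<le> (L - 1) + (L - 1) + 2 / v"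
    using ln_le_minus_one[of L] L1 Ldef by simp
  finally have lnk: "ln (n / k) \<le> 2 * L + 2 / v" by simp
  have "k * ln (n / k) \<le> k * (2 * L + 2 / v)" using k0 lnk by (intro mult_left_mono) auto
  also have "\<dots> = 4 * \<delta> * s + 4 * \<delta> * s / (v * L)" unfolding k using L1 v0 by (simp add: field_simps)
  also have "4 * \<delta> * s / (v * L) \<le> 4 * \<delta> * s / v"
    using L1 v0 d0 s by (intro divide_left_mono) (auto simp: mult_le_cancel_left1 intro: mult_pos_pos)
  finally have A0: "k * ln (n / k) \<le> 4 * \<delta> * s + 4 * \<delta> * s / v" by (simp add: add_left_mono)
  have e1: "4 * \<delta> * s = 2 * v^2 * s" using d0 by simp
  have e2: "4 * \<delta> * s / v = 2 * v * s" using d0 v0 by (simp add: power2_eq_square field_simps)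
  have A: "k * ln (n / k) \<le> 2 * v^2 * s + 2 * v * s" using A0 e1 e2 by linarith
  have "2 * k = 4 * \<delta> * s / L" using k by simp
  also have "\<dots> \<le> 4 * \<delta> * s / 1"
    using L1 d0 s by (intro divide_left_mono) auto
  also have "\<dots> = 4 * \<delta> * s" by simp
  finally have B: "2 * k \<le> 2 * v^2 * s" using e1 by linarith
  have "v^2 \<le> v" using v0 by (simp add: power2_eq_square mult_le_cancel_left1)
  hence "v^2 * s \<le> v * s" using s by (intro mult_right_mono) auto
  hence "2 * k + k * ln (n / k) \<le> 6 * v * s" using A B by linarith
  also have "\<dots> \<le> c * s / 4" using v0 s by (simp add: field_simps)
  also have "\<dots> \<le> (c - \<delta>) * s / 2"
  proof -
    have "\<delta> \<le> c / 2" using d0 v0 \<open>v^2 \<le> v\<close> by linarith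
    thus ?thesis using s by (simp add: field_simps)
  qed
  finally show ?thesis .
qed

lemma small_s:
  fixes s n \<delta> :: real
  assumes "1 \<le> s" "s \<le> sqrt n" "\<delta> * s \<le> ln n / 2"
  shows "\<delta> * s < ln (exp 1 * n / s)"
proof -
  have "1 \<le> sqrt n" using assms(1,2) by linarith
  hence n: "n \<ge> 1" using real_sqrt_le_iff[of 1 n] by simp
  have "ln s \<le> ln (sqrt n)" using assms n by (subst ln_le_cancel_iff) auto
  also have "ln (sqrt n) = ln n / 2" using n by (simp add: ln_sqrt)
  finally have "ln s \<le> ln n / 2" .
  moreover have "ln (exp 1 * n / s) = 1 + ln n - ln s" using n assms by (simp add: ln_mult ln_div)
  ultimately show ?thesis using assms by linarith
qed

lemma geo_bound:
  fixes a :: real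
  assumes "a > 0"
  shows "(\<Sum>s\<le>N. exp (- a * real s / 4)) \<le> 1 / (1 - exp (- a / 4))"
proof -
  let ?r = "exp (- a / 4)"
  have r: "?r < 1" "?r > 0" using assms by auto
  have "(\<Sum>s\<le>N. exp (- a * real s / 4)) = (\<Sum>s\<le>N. ?r ^ s)"
    by (intro sum.cong refl) (simp add: exp_of_nat_mult[symmetric] algebra_simps)
  also have "\<dots> = (1 - ?r ^ Suc N) / (1 - ?r)" using r by (simp add: sum_gp0)
  also have "\<dots> \<le> 1 / (1 - ?r)" using r by (intro divide_right_mono) auto
  finally show ?thesis .
qed

lemma lim1:
  fixes a :: real assumes "a > 0"
  shows "(\<lambda>n. exp (- a * sqrt (real n) / 4)) \<longlonglongrightarrow> 0"
  using assms by real_asymp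

lemma lim2:
  fixes a \<delta> :: real assumes "a > 0" "\<delta> > 0"
  shows "(\<lambda>n. exp (- a * (ln (real n) / (2 * \<delta>)) / 4)) \<longlonglongrightarrow> 0"
  using assms by real_asymp



lemma card_crossing:
  assumes "S \<subseteq> {..<n}"
  shows "card ((\<lambda>(u, v). {u, v}) ` (S \<times> ({..<n} - S))) = card S * (n - card S)"
proof -
  have fS: "finite S" using assms finite_subset by blast
  have "inj_on (\<lambda>(u, v). {u, v}) (S \<times> ({..<n} - S))"
    by (auto simp: inj_on_def doubleton_eq_iff)
  hence "card ((\<lambda>(u, v). {u, v}) ` (S \<times> ({..<n} - S))) = card (S \<times> ({..<n} - S))"
    by (rule card_image)
  also have "\<dots> = card S * (n - card S)"
    using assms fS by (simp add: card_cartesian_product card_Diff_subset)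
  finally show ?thesis .
qed

lemma crossing_sub: "S \<subseteq> {..<n} \<Longrightarrow> (\<lambda>(u, v). {u, v}) ` (S \<times> ({..<n} - S)) \<subseteq> all_pairs n"
  unfolding all_pairs_def by auto

lemma crossing_boundary:
  "R \<inter> (\<lambda>(u, v). {u, v}) ` (S \<times> ({..<n} - S)) \<subseteq> boundary (E \<union> R) S"
proof
  fix e assume "e \<in> R \<inter> (\<lambda>(u, v). {u, v}) ` (S \<times> ({..<n} - S))"
  then obtain u v where "e \<in> R" "e = {u, v}" "u \<in> S" "v \<notin> S" by auto
  moreover have "{u, v} \<inter> S = {u}" using \<open>u \<in> S\<close> \<open>v \<notin> S\<close> by auto
  ultimately show "e \<in> boundary (E \<union> R) S" unfolding boundary_def by auto
qed

lemma count_s: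
  fixes c \<alpha> :: real
  assumes conn: "connected_graph n E" and n: "n \<ge> 1" and c: "c > 0"
    and v: "v = min c 1 / 24" and d: "\<delta> = v^2 / 2" and a: "a = c - \<delta>"
    and s: "1 \<le> s" "s \<le> n"
    and T: "\<And>S. S \<in> T \<Longrightarrow> S \<subseteq> {..<n} \<and> S \<noteq> {} \<and> card S = s \<and>
              real (card (boundary E S)) < \<delta> / ln (exp 1 * real n / real s) * real s"
  shows "real (card T) \<le> exp (a * real s / 2)"
proof -
  have E: "E \<subseteq> all_pairs n" using conn unfolding connected_graph_def by auto
  define L where "L = ln (exp 1 * real n / real s)"
  define k where "k = 2 * \<delta> * real s / L"
  define y where "y = k / real n"
  have v0: "v > 0" "v \<le> 1/24" using v c by auto
  have d0: "\<delta> > 0" "\<delta> \<le> 1/2"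
  proof -
    have "v^2 > 0" using v0 by simp
    thus "\<delta> > 0" using d by linarith
    have "v^2 \<le> 1" using v0 by (simp add: power_le_one)
    thus "\<delta> \<le> 1/2" using d by linarith
  qed
  have "real n / real s \<ge> 1" using s by simp
  hence L1: "L \<ge> 1"
  proof -
    have "exp 1 * 1 \<le> exp 1 * (real n / real s)" using \<open>real n / real s \<ge> 1\<close> by (intro mult_left_mono) auto
    hence "exp 1 \<le> exp 1 * real n / real s" by simp
    moreover have pos: "0 < exp 1 * real n / real s" using s by simp
    ultimately have "ln (exp 1) \<le> L" unfolding L_def by (subst ln_le_cancel_iff) auto
    thus ?thesis by simp
  qed
  have k0: "k > 0" unfolding k_def using d0 L1 s by simp
  have "k \<le> 2 * \<delta> * real s / 1" unfolding k_def using L1 d0 s by (intro divide_left_mono) auto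
  also have "\<dots> \<le> real s" using d0 s by simp
  finally have ks: "k \<le> real s" .
  have y: "0 < y" "y \<le> 1" unfolding y_def using k0 ks s n by auto
  have "real (card T) \<le> (1 + 2 * y) ^ n / y powr k"
  proof (rule count_family[OF conn _ y])
    fix S assume S: "S \<in> T"
    have "real (card (\<Union>(boundary E S))) \<le> 2 * real (card (boundary E S))"
      using card_union_boundary[OF E, of S] by linarith
    also have "\<dots> < k" using T[OF S] unfolding k_def L_def by simp
    finally show "S \<subseteq> {..<n} \<and> S \<noteq> {} \<and> real (card (\<Union>(boundary E S))) < k" using T[OF S] by blast
  qed
  also have "(1 + 2 * y) ^ n \<le> exp (2 * k)"
  proof -
    have "(1 + 2 * y) ^ n \<le> exp (2 * y) ^ n"
      using y by (intro power_mono) (auto simp: exp_ge_add_one_self add.commute)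
    also have "\<dots> = exp (2 * k)" unfolding y_def using n by (simp add: exp_of_nat_mult[symmetric])
    finally show ?thesis .
  qed
  hence "(1 + 2 * y) ^ n / y powr k \<le> exp (2 * k) / y powr k"
    using y by (intro divide_right_mono) auto
  also have "exp (2 * k) / y powr k = exp (2 * k + k * ln (real n / k))"
  proof -
    have "y powr k = exp (k * ln y)" using y by (simp add: powr_def)
    also have "ln y = - ln (real n / k)" unfolding y_def using k0 n by (simp add: ln_div)
    finally have "y powr k = inverse (exp (k * ln (real n / k)))" by (simp add: exp_minus)
    thus ?thesis by (simp add: exp_add divide_inverse)
  qed
  also have "\<dots> \<le> exp ((c - \<delta>) * real s / 2)"
    using key_ineq[OF c _ _ v d L_def k_def] s by simp
  finally show ?thesis using a by simp
qed

lemma sum_bound: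
  fixes c \<alpha> :: real
  assumes conn: "connected_graph n E" and n: "n \<ge> 1" and c: "c > 0" and \<alpha>: "\<alpha> < 1"
    and v: "v = min c 1 / 24" and d: "\<delta> = v^2 / 2" and a: "a = c - \<delta>"
    and SS: "SS = {S. S \<subseteq> {..<n} \<and> 0 < card S \<and> real (card S) \<le> \<alpha> * real n \<and>
              real (card (boundary E S)) < \<delta> / ln (exp 1 * real n / real (card S)) * real (card S)}"
  shows "(\<Sum>S\<in>SS. exp (- a * real (card S))) \<le>
          (exp (- a * sqrt (real n) / 4) + exp (- a * (ln (real n) / (2 * \<delta>)) / 4)) / (1 - exp (- a / 4))"
proof -
  define X where "X = exp (- a * sqrt (real n) / 4) + exp (- a * (ln (real n) / (2 * \<delta>)) / 4)"
  have v0: "v > 0" "v \<le> 1/24" "v \<le> c / 24" using v c by auto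
  have d0: "\<delta> > 0" "\<delta> \<le> c / 2"
  proof -
    have "v^2 > 0" using v0 by simp
    thus "\<delta> > 0" using d by linarith
    have "v^2 \<le> v" using v0 by (simp add: power2_eq_square mult_le_cancel_left1)
    thus "\<delta> \<le> c / 2" using d v0 by linarith
  qed
  have a0: "a > 0" using a d0 c by linarith
  have X0: "X \<ge> 0" unfolding X_def by simp
  have finSS: "finite SS" unfolding SS by (rule finite_subset[of _ "Pow {..<n}"]) auto
  have "(\<Sum>S\<in>SS. exp (- a * real (card S))) =
        (\<Sum>s\<le>n. \<Sum>S\<in>{S \<in> SS. card S = s}. exp (- a * real (card S)))"
    by (rule sum.group[symmetric, OF finSS]) (auto simp: SS card_mono[of "{..<n}", simplified])
  also have "\<dots> \<le> (\<Sum>s\<le>n. X * exp (- a * real s / 4))"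
  proof (rule sum_mono)
    fix s assume "s \<in> {..n}"
    let ?T = "{S \<in> SS. card S = s}"
    have "(\<Sum>S\<in>?T. exp (- a * real (card S))) = real (card ?T) * exp (- a * real s)" by simp
    also have "\<dots> \<le> X * exp (- a * real s / 4)"
    proof (cases "?T = {}")
      case True
      hence "card ?T = 0" by (simp only: card.empty)
      thus ?thesis using X0 by simp
    next
      case False
      then obtain S where S: "S \<in> SS" "card S = s" by auto
      have S1: "S \<subseteq> {..<n}" "0 < card S" "real (card S) \<le> \<alpha> * real n"
        "real (card (boundary E S)) < \<delta> / ln (exp 1 * real n / real (card S)) * real (card S)"
        using S(1) unfolding SS by auto
      have "\<alpha> * real n < real n" using \<alpha> n by simp
      hence sn: "s < n" using S1 S by linarith
      have s1: "s \<ge> 1" using S1 S by simp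
      have "S \<noteq> {}" using S1(2) by auto
      hence "card (boundary E S) \<ge> 1" using boundary_card_pos[OF conn S1(1)] S sn by blast
      hence "1 < \<delta> / ln (exp 1 * real n / real s) * real s" using S1 S by simp
      have L1: "ln (exp 1 * real n / real s) > 0"
      proof -
        have "exp 1 * 1 \<le> exp 1 * (real n / real s)" using sn s1 by (intro mult_left_mono) auto
        hence "exp 1 \<le> exp 1 * real n / real s" by simp
        moreover have "(1::real) < exp 1" by simp
        ultimately have "1 < exp 1 * real n / real s" by linarith
        thus ?thesis by simp
      qed
      have big: "\<delta> * real s > ln (exp 1 * real n / real s)"
        using \<open>1 < _\<close> L1 by (simp add: field_simps)
      have "\<not> (real s \<le> sqrt (real n) \<and> \<delta> * real s \<le> ln (real n) / 2)"
        using small_s[of "real s" "real n" \<delta>] s1 big by auto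
      hence "real s > sqrt (real n) \<or> real s > ln (real n) / (2 * \<delta>)"
        using d0 by (auto simp: field_simps)
      hence ex: "exp (- a * real s / 4) \<le> X"
      proof
        assume "real s > sqrt (real n)"
        hence "exp (- a * real s / 4) \<le> exp (- a * sqrt (real n) / 4)" using a0 by simp
        thus ?thesis unfolding X_def by (smt (verit) exp_gt_zero)
      next
        assume "real s > ln (real n) / (2 * \<delta>)"
        hence "a * (ln (real n) / (2 * \<delta>)) \<le> a * real s" using a0 by (intro mult_left_mono) auto
        hence "exp (- a * real s / 4) \<le> exp (- a * (ln (real n) / (2 * \<delta>)) / 4)" by simp
        thus ?thesis unfolding X_def by (smt (verit) exp_gt_zero)
      qed
      have cnt: "real (card ?T) \<le> exp (a * real s / 2)"
        by (rule count_s[OF conn n c v d a]) (use s1 sn SS in auto)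
      have "real (card ?T) * exp (- a * real s) \<le> exp (a * real s / 2) * exp (- a * real s)"
        using cnt by (intro mult_right_mono) auto
      also have "\<dots> = exp (- a * real s / 4) * exp (- a * real s / 4)"
        by (simp add: exp_add[symmetric])
      also have "\<dots> \<le> X * exp (- a * real s / 4)"
        using ex by (intro mult_right_mono) auto
      finally show ?thesis .
    qed
    finally show "(\<Sum>S\<in>?T. exp (- a * real (card S))) \<le> X * exp (- a * real s / 4)" .
  qed
  also have "\<dots> = X * (\<Sum>s\<le>n. exp (- a * real s / 4))" by (simp add: sum_distrib_left)
  also have "\<dots> \<le> X * (1 / (1 - exp (- a / 4)))"
    using geo_bound[OF a0] X0 by (intro mult_left_mono) auto
  finally show ?thesis unfolding X_def by simp
qed

lemma main_bound:
  fixes \<epsilon> \<alpha> :: real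
  assumes \<epsilon>: "\<epsilon> > 0" and \<alpha>: "\<alpha> < 1" and conn: "connected_graph n E" and n: "n \<ge> 1"
    and p1: "\<epsilon> / real n \<le> 1"
    and c: "c = \<epsilon> * (1 - \<alpha>) / 2"
    and v: "v = min c 1 / 24" and d: "\<delta> = v^2 / 2" and a: "a = c - \<delta>"
  shows "1 - (exp (- a * sqrt (real n) / 4) + exp (- a * (ln (real n) / (2 * \<delta>)) / 4)) / (1 - exp (- a / 4))
     \<le> gnp_prob n (\<epsilon> / real n) (\<lambda>R.
                \<forall>S. S \<subseteq> {..<n} \<and> 0 < card S \<and> real (card S) \<le> \<alpha> * real n \<longrightarrow>
                  real (card (boundary (E \<union> R) S)) \<ge>
                    \<delta> / ln (exp 1 * real n / real (card S)) * real (card S))"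
    (is "_ \<le> gnp_prob n ?p ?P")
proof -
  define SS where "SS = {S. S \<subseteq> {..<n} \<and> 0 < card S \<and> real (card S) \<le> \<alpha> * real n \<and>
              real (card (boundary E S)) < \<delta> / ln (exp 1 * real n / real (card S)) * real (card S)}"
  define C where "C = (\<lambda>S :: nat set. (\<lambda>(u, v). {u, v}) ` (S \<times> ({..<n} - S)))"
  define t where "t = (\<lambda>S :: nat set. \<delta> / ln (exp 1 * real n / real (card S)) * real (card S))"
  have E: "E \<subseteq> all_pairs n" using conn unfolding connected_graph_def by auto
  have c0: "c > 0" unfolding c using \<epsilon> \<alpha> by simp
  have v0: "v > 0" "v \<le> 1/24" "v \<le> c / 24" using v c0 by auto
  have d0: "\<delta> > 0" "\<delta> \<le> c / 2"
  proof -
    have "v^2 > 0" using v0 by simp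
    thus "\<delta> > 0" using d by linarith
    have "v^2 \<le> v" using v0 by (simp add: power2_eq_square mult_le_cancel_left1)
    thus "\<delta> \<le> c / 2" using d v0 by linarith
  qed
  have p: "0 \<le> ?p" "?p \<le> 1" using \<epsilon> p1 by auto
  have finSS: "finite SS" unfolding SS_def by (rule finite_subset[of _ "Pow {..<n}"]) auto
  have "gnp_prob n ?p (\<lambda>R. \<not> ?P R) \<le> gnp_prob n ?p (\<lambda>R. \<exists>S\<in>SS. real (card (R \<inter> C S)) < t S)"
  proof (rule gnp_mono[OF p])
    fix R assume R: "R \<subseteq> all_pairs n" "\<not> ?P R"
    then obtain S where S: "S \<subseteq> {..<n}" "0 < card S" "real (card S) \<le> \<alpha> * real n"
      "real (card (boundary (E \<union> R) S)) < t S" unfolding t_def by auto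
    have fin: "finite (boundary (E \<union> R) S)"
      using finite_subset[OF _ finite_all_pairs, of "boundary (E \<union> R) S" n] E R(1)
      unfolding boundary_def by blast
    have "boundary E S \<subseteq> boundary (E \<union> R) S" unfolding boundary_def by auto
    hence "card (boundary E S) \<le> card (boundary (E \<union> R) S)" using fin by (rule card_mono[rotated])
    hence "S \<in> SS" using S unfolding SS_def t_def by auto
    moreover have "card (R \<inter> C S) \<le> card (boundary (E \<union> R) S)"
      using fin crossing_boundary[of R S n E] unfolding C_def by (rule card_mono)
    ultimately show "\<exists>S\<in>SS. real (card (R \<inter> C S)) < t S" using S(4) by force
  qed
  also have "\<dots> \<le> (\<Sum>S\<in>SS. gnp_prob n ?p (\<lambda>R. real (card (R \<inter> C S)) < t S))"
    by (rule gnp_union[OF p finSS])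
  also have "\<dots> \<le> (\<Sum>S\<in>SS. exp (- a * real (card S)))"
  proof (rule sum_mono)
    fix S assume "S \<in> SS"
    hence S: "S \<subseteq> {..<n}" "0 < card S" "real (card S) \<le> \<alpha> * real n" unfolding SS_def by auto
    have sn: "card S \<le> n" using card_mono[OF _ S(1)] by simp
    have "gnp_prob n ?p (\<lambda>R. real (card (R \<inter> C S)) < t S) \<le> exp (t S - ?p * real (card (C S)) / 2)"
      using gnp_chernoff[OF p crossing_sub[OF S(1)]] unfolding C_def by simp
    also have "\<dots> \<le> exp (- a * real (card S))"
    proof -
      have L1: "ln (exp 1 * real n / real (card S)) \<ge> 1"
      proof -
        have "exp 1 * 1 \<le> exp 1 * (real n / real (card S))" using sn S(2) by (intro mult_left_mono) auto
        hence "exp 1 \<le> exp 1 * real n / real (card S)" by simp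
        moreover have pos: "0 < exp 1 * real n / real (card S)" using S(2) sn by simp
        ultimately have "ln (exp 1) \<le> ln (exp 1 * real n / real (card S))" by (subst ln_le_cancel_iff) auto
        thus ?thesis by simp
      qed
      have "t S \<le> \<delta> / 1 * real (card S)" unfolding t_def
        using L1 d0 by (intro mult_right_mono divide_left_mono) auto
      hence tS: "t S \<le> \<delta> * real (card S)" by simp
      have "card (C S) = card S * (n - card S)" unfolding C_def by (rule card_crossing[OF S(1)])
      hence "real (card (C S)) = real (card S) * (real n - real (card S))" using sn by (simp add: of_nat_diff)
      moreover have "real n - real (card S) \<ge> (1 - \<alpha>) * real n" using S(3) by (simp add: algebra_simps)
      ultimately have "real (card (C S)) \<ge> real (card S) * ((1 - \<alpha>) * real n)"
        by (simp add: mult_left_mono)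
      hence "?p * real (card (C S)) / 2 \<ge> ?p * (real (card S) * ((1 - \<alpha>) * real n)) / 2"
        using p by (intro divide_right_mono mult_left_mono) auto
      moreover have "?p * (real (card S) * ((1 - \<alpha>) * real n)) / 2 = c * real (card S)"
        unfolding c using n by (simp add: field_simps)
      ultimately have "?p * real (card (C S)) / 2 \<ge> c * real (card S)" by simp
      moreover have "c * real (card S) = \<delta> * real (card S) + a * real (card S)"
        unfolding a by (simp add: algebra_simps)
      ultimately have "t S - ?p * real (card (C S)) / 2 \<le> - a * real (card S)"
        using tS by linarith
      thus ?thesis by simp
    qed
    finally show "gnp_prob n ?p (\<lambda>R. real (card (R \<inter> C S)) < t S) \<le> exp (- a * real (card S))" .
  qed
  also have "\<dots> \<le> (exp (- a * sqrt (real n) / 4) + exp (- a * (ln (real n) / (2 * \<delta>)) / 4)) / (1 - exp (- a / 4))"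
    by (rule sum_bound[OF conn n c0 \<alpha> v d a SS_def])
  finally show ?thesis using gnp_compl[of n ?p ?P] by linarith
qed

lemma part1:
  fixes \<epsilon> \<alpha> :: real
  assumes \<epsilon>: "\<epsilon> > 0" and \<alpha>: "\<alpha> < 1"
  shows "\<exists>\<delta>::real>0. \<forall>G :: nat \<Rightarrow> nat set set.
            (\<forall>n. connected_graph n (G n)) \<longrightarrow>
            (\<lambda>n. gnp_prob n (\<epsilon> / real n) (\<lambda>R.
                \<forall>S. S \<subseteq> {..<n} \<and> 0 < card S \<and> real (card S) \<le> \<alpha> * real n \<longrightarrow>
                  real (card (boundary (G n \<union> R) S)) \<ge>
                    \<delta> / ln (exp 1 * real n / real (card S)) * real (card S)))
            \<longlonglongrightarrow> 1"
proof -
  define c where "c = \<epsilon> * (1 - \<alpha>) / 2"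
  define v where "v = min c 1 / 24"
  define \<delta> where "\<delta> = v^2 / 2"
  define a where "a = c - \<delta>"
  have c0: "c > 0" unfolding c_def using \<epsilon> \<alpha> by simp
  have v0: "v > 0" "v \<le> 1/24" "v \<le> c / 24" using v_def c0 by auto
  have d0: "\<delta> > 0" "\<delta> \<le> c / 2"
  proof -
    have "v^2 > 0" using v0 by simp
    thus "\<delta> > 0" using \<delta>_def by linarith
    have "v^2 \<le> v" using v0 by (simp add: power2_eq_square mult_le_cancel_left1)
    thus "\<delta> \<le> c / 2" using \<delta>_def v0 by linarith
  qed
  have a0: "a > 0" using a_def d0 c0 by linarith
  show ?thesis
  proof (intro exI[of _ \<delta>] conjI allI impI)
    show "\<delta> > 0" by (rule d0)
    fix G :: "nat \<Rightarrow> nat set set"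
    assume conn: "\<forall>n. connected_graph n (G n)"
    let ?B = "\<lambda>n. (exp (- a * sqrt (real n) / 4) + exp (- a * (ln (real n) / (2 * \<delta>)) / 4)) / (1 - exp (- a / 4))"
    have B0: "?B \<longlonglongrightarrow> 0"
      using tendsto_divide_zero[OF tendsto_add[OF lim1[OF a0] lim2[OF a0 d0(1)], simplified]] by simp
    have ev: "eventually (\<lambda>n. n \<ge> nat \<lceil>\<epsilon>\<rceil> + 1) sequentially" by (rule eventually_ge_at_top)
    show "(\<lambda>n. gnp_prob n (\<epsilon> / real n) (\<lambda>R.
                \<forall>S. S \<subseteq> {..<n} \<and> 0 < card S \<and> real (card S) \<le> \<alpha> * real n \<longrightarrow>
                  real (card (boundary (G n \<union> R) S)) \<ge>
                    \<delta> / ln (exp 1 * real n / real (card S)) * real (card S))) \<longlonglongrightarrow> 1"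
    proof (rule tendsto_sandwich[where f="\<lambda>n. 1 - ?B n" and h="\<lambda>_. 1"])
      show "(\<lambda>n. 1 - ?B n) \<longlonglongrightarrow> 1" using tendsto_diff[OF tendsto_const B0, of 1] by simp
      show "((\<lambda>_. 1) \<longlongrightarrow> (1::real)) sequentially" by simp
      show "eventually (\<lambda>n. 1 - ?B n \<le> gnp_prob n (\<epsilon> / real n) (\<lambda>R.
                \<forall>S. S \<subseteq> {..<n} \<and> 0 < card S \<and> real (card S) \<le> \<alpha> * real n \<longrightarrow>
                  real (card (boundary (G n \<union> R) S)) \<ge>
                    \<delta> / ln (exp 1 * real n / real (card S)) * real (card S))) sequentially"
        using ev
      proof eventually_elim
        case (elim n)
        have n1: "n \<ge> 1" using elim by simp
        have "real n \<ge> \<epsilon>" using elim by linarith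
        hence p1: "\<epsilon> / real n \<le> 1" using n1 by (simp add: divide_le_eq)
        show ?case by (rule main_bound[OF \<epsilon> \<alpha> conn[rule_format] n1 p1 c_def v_def \<delta>_def a_def])
      qed
      show "eventually (\<lambda>n. gnp_prob n (\<epsilon> / real n) (\<lambda>R.
                \<forall>S. S \<subseteq> {..<n} \<and> 0 < card S \<and> real (card S) \<le> \<alpha> * real n \<longrightarrow>
                  real (card (boundary (G n \<union> R) S)) \<ge>
                    \<delta> / ln (exp 1 * real n / real (card S)) * real (card S)) \<le> 1) sequentially"
        using ev
      proof eventually_elim
        case (elim n)
        have n1: "n \<ge> 1" using elim by simp
        have "real n \<ge> \<epsilon>" using elim by linarith
        hence p1: "\<epsilon> / real n \<le> 1" using n1 by (simp add: divide_le_eq)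
        show ?case by (rule gnp_le1) (use p1 \<epsilon> in auto)
      qed
    qed
  qed
qed

lemma cheeger_bound:
  fixes \<delta> :: real
  assumes n: "n \<ge> 2" and d: "\<delta> > 0"
    and P: "\<forall>S. S \<subseteq> {..<n} \<and> 0 < card S \<and> real (card S) \<le> 1/2 * real n \<longrightarrow>
                  real (card (boundary H S)) \<ge>
                    \<delta> / ln (exp 1 * real n / real (card S)) * real (card S)"
  shows "cheeger n H \<ge> \<delta> / ln (exp 1 * real n)"
proof -
  let ?X = "{real (card (boundary H U)) / real (card U) | U.
      U \<subseteq> {..<n} \<and> 0 < card U \<and> real (card U) \<le> real n / 2}"
  have "?X = (\<lambda>U. real (card (boundary H U)) / real (card U)) ` {U. U \<subseteq> {..<n} \<and> 0 < card U \<and> real (card U) \<le> real n / 2}"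
    by auto
  moreover have "finite {U. U \<subseteq> {..<n} \<and> 0 < card U \<and> real (card U) \<le> real n / 2}"
    by (rule finite_subset[of _ "Pow {..<n}"]) auto
  ultimately have fin: "finite ?X" by simp
  have "{0} \<subseteq> {..<n} \<and> 0 < card {0::nat} \<and> real (card {0::nat}) \<le> real n / 2" using n by auto
  hence ne: "?X \<noteq> {}" by blast
  have "\<forall>x\<in>?X. \<delta> / ln (exp 1 * real n) \<le> x"
  proof
    fix x assume "x \<in> ?X"
    then obtain U where U: "x = real (card (boundary H U)) / real (card U)" "U \<subseteq> {..<n}" "0 < card U"
      "real (card U) \<le> real n / 2" by blast
    have bU: "real (card (boundary H U)) \<ge> \<delta> / ln (exp 1 * real n / real (card U)) * real (card U)"
      using P U by auto
    have u1: "real (card U) \<ge> 1" using U by simp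
    have un: "real (card U) \<le> real n" using U by simp
    have L1: "ln (exp 1 * real n / real (card U)) \<ge> 1"
    proof -
      have "exp 1 * 1 \<le> exp 1 * (real n / real (card U))" using un u1 by (intro mult_left_mono) auto
      hence "exp 1 \<le> exp 1 * real n / real (card U)" by simp
      moreover have pos: "0 < exp 1 * real n / real (card U)" using u1 n by simp
      ultimately have "ln (exp 1) \<le> ln (exp 1 * real n / real (card U))" by (subst ln_le_cancel_iff) auto
      thus ?thesis by simp
    qed
    have pos2: "0 < exp 1 * real n" using n by simp
    have "exp 1 * real n / real (card U) \<le> exp 1 * real n / 1"
      using u1 pos2 by (intro divide_left_mono) auto
    hence "ln (exp 1 * real n / real (card U)) \<le> ln (exp 1 * real n)"
      using u1 pos2 by (subst ln_le_cancel_iff) auto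
    hence "\<delta> / ln (exp 1 * real n) \<le> \<delta> / ln (exp 1 * real n / real (card U))"
      using L1 d by (intro divide_left_mono) auto
    also have "\<dots> \<le> x" using bU u1 unfolding U(1) by (simp add: le_divide_eq)
    finally show "\<delta> / ln (exp 1 * real n) \<le> x" .
  qed
  thus ?thesis unfolding cheeger_def using Min_ge_iff[OF fin ne] by blast
qed

theorem theorem2:
  shows "(\<forall>\<epsilon>::real>0. \<forall>\<alpha>::real<1. \<exists>\<delta>::real>0. \<forall>G :: nat \<Rightarrow> nat set set.
            (\<forall>n. connected_graph n (G n)) \<longrightarrow>
            (\<lambda>n. gnp_prob n (\<epsilon> / real n) (\<lambda>R.
                \<forall>S. S \<subseteq> {..<n} \<and> 0 < card S \<and> real (card S) \<le> \<alpha> * real n \<longrightarrow>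
                  real (card (boundary (G n \<union> R) S)) \<ge>
                    \<delta> / ln (exp 1 * real n / real (card S)) * real (card S)))
            \<longlonglongrightarrow> 1)
       \<and> (\<forall>\<epsilon>::real>0. \<exists>\<delta>::real>0. \<forall>G :: nat \<Rightarrow> nat set set.
            (\<forall>n. connected_graph n (G n)) \<longrightarrow>
            (\<lambda>n. gnp_prob n (\<epsilon> / real n) (\<lambda>R.
                cheeger n (G n \<union> R) \<ge> \<delta> / ln (exp 1 * real n)))
            \<longlonglongrightarrow> 1)"
proof (intro conjI allI impI)
  fix \<epsilon> \<alpha> :: real assume "\<epsilon> > 0" "\<alpha> < 1"
  thus "\<exists>\<delta>::real>0. \<forall>G :: nat \<Rightarrow> nat set set.
            (\<forall>n. connected_graph n (G n)) \<longrightarrow>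
            (\<lambda>n. gnp_prob n (\<epsilon> / real n) (\<lambda>R.
                \<forall>S. S \<subseteq> {..<n} \<and> 0 < card S \<and> real (card S) \<le> \<alpha> * real n \<longrightarrow>
                  real (card (boundary (G n \<union> R) S)) \<ge>
                    \<delta> / ln (exp 1 * real n / real (card S)) * real (card S)))
            \<longlonglongrightarrow> 1" by (rule part1)
next
  fix \<epsilon> :: real assume \<epsilon>: "\<epsilon> > 0"
  obtain \<delta> :: real where d: "\<delta> > 0" and H: "\<forall>G :: nat \<Rightarrow> nat set set.
            (\<forall>n. connected_graph n (G n)) \<longrightarrow>
            (\<lambda>n. gnp_prob n (\<epsilon> / real n) (\<lambda>R.
                \<forall>S. S \<subseteq> {..<n} \<and> 0 < card S \<and> real (card S) \<le> 1/2 * real n \<longrightarrow>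
                  real (card (boundary (G n \<union> R) S)) \<ge>
                    \<delta> / ln (exp 1 * real n / real (card S)) * real (card S)))
            \<longlonglongrightarrow> 1"
    using part1[OF \<epsilon>, of "1/2"] by auto
  show "\<exists>\<delta>::real>0. \<forall>G :: nat \<Rightarrow> nat set set.
            (\<forall>n. connected_graph n (G n)) \<longrightarrow>
            (\<lambda>n. gnp_prob n (\<epsilon> / real n) (\<lambda>R.
                cheeger n (G n \<union> R) \<ge> \<delta> / ln (exp 1 * real n)))
            \<longlonglongrightarrow> 1"
  proof (intro exI[of _ \<delta>] conjI allI impI)
    show "\<delta> > 0" by (rule d)
    fix G :: "nat \<Rightarrow> nat set set"
    assume conn: "\<forall>n. connected_graph n (G n)"
    have ev: "eventually (\<lambda>n. n \<ge> nat \<lceil>\<epsilon>\<rceil> + 2) sequentially" by (rule eventually_ge_at_top)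
    show "(\<lambda>n. gnp_prob n (\<epsilon> / real n) (\<lambda>R.
                cheeger n (G n \<union> R) \<ge> \<delta> / ln (exp 1 * real n))) \<longlonglongrightarrow> 1"
    proof (rule tendsto_sandwich[OF _ _ H[rule_format, OF conn[rule_format]] tendsto_const])
      show "eventually (\<lambda>n. gnp_prob n (\<epsilon> / real n) (\<lambda>R.
                \<forall>S. S \<subseteq> {..<n} \<and> 0 < card S \<and> real (card S) \<le> 1/2 * real n \<longrightarrow>
                  real (card (boundary (G n \<union> R) S)) \<ge>
                    \<delta> / ln (exp 1 * real n / real (card S)) * real (card S))
            \<le> gnp_prob n (\<epsilon> / real n) (\<lambda>R.
                cheeger n (G n \<union> R) \<ge> \<delta> / ln (exp 1 * real n))) sequentially"
        using ev
      proof eventually_elim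
        case (elim n)
        have n2: "n \<ge> 2" using elim by simp
        have "real n \<ge> \<epsilon>" using elim by linarith
        hence p1: "\<epsilon> / real n \<le> 1" using n2 by (simp add: divide_le_eq)
        show ?case
          by (rule gnp_mono, use \<epsilon> in simp, rule p1, erule cheeger_bound[OF n2 d])
      qed
      show "eventually (\<lambda>n. gnp_prob n (\<epsilon> / real n) (\<lambda>R.
                cheeger n (G n \<union> R) \<ge> \<delta> / ln (exp 1 * real n)) \<le> 1) sequentially"
        using ev
      proof eventually_elim
        case (elim n)
        have n2: "n \<ge> 2" using elim by simp
        have "real n \<ge> \<epsilon>" using elim by linarith
        hence p1: "\<epsilon> / real n \<le> 1" using n2 by (simp add: divide_le_eq)
        show ?case by (rule gnp_le1) (use p1 \<epsilon> in auto)
      qed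
    qed
  qed
qed

end
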